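(* Suppose $\hat{\mathcal W}\subseteq\mathcal W$, $\ell:\mathcal Z\times\mathcal W\to[0,1]$, and $\ell$ is $\mathfrak L$-Lipschitz with respect to $\rho:\mathcal W\times\hat{\mathcal W}\to\mathbb R^+$, i.e. $|\ell(z,w)-\ell(z,\hat w)|\le\mathfrak L\rho(w,\hat w)$ for all $z\in\mathcal Z$, $w\in\mathcal W$, $\hat w\in\hat{\mathcal W}$. Let the optimization algorithm induce the conditional distribution $\pi_S:=P_{W^{\mathsf T}|S}$ of the trajectory. Then for any $\epsilon\in\mathbb R$ and $\delta\in(0,1)$, with probability at least $1-\delta$ over $S\sim P_S$, $$\mathbb E_{W^{\mathsf T}\sim\pi_S}\big[\mathrm{gen}(S,W^{\mathsf T})\big]\le\sqrt{\frac{\mathfrak{RD}(S,\epsilon;\pi_S)+\log(\sqrt{2n}\,M/\delta)}{2n-1}+4\mathfrak L\epsilon},$$ where $M:=\exp\Big(\sup_{\nu_S\in\mathcal G^\delta_S}\mathbb E_{W^{\mathsf T}\sim\pi_S}\Big[\log\frac{d\pi_S}{d[\pi_S\nu_S]_{W^{\mathsf T}}}(W^{\mathsf T})\Big]\Big)$ and $[\pi_S\nu_S]_{W^{\mathsf T}}$ is the marginal distribution of $W^{\mathsf T}$ under $S\sim\nu_S$, $W^{\mathsf T}|S\sim\pi_S$.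
   Context: Setup: $\mathcal Z$ data space, $\mathcal W$ hypothesis space, unknown $\mu$, $S=(Z_1,\dots,Z_n)\sim P_S=\mu^{\otimes n}$ in $\mathcal S=\mathcal Z^n$. $\mathcal L(w)=\mathbb E_{Z\sim\mu}\ell(Z,w)$, $\hat{\mathcal L}(s,w)=\frac1n\sum_i\ell(z_i,w)$, $\mathrm{gen}(s,w)=\mathcal L(w)-\hat{\mathcal L}(s,w)$. Natural logs; $D_{KL}$ Kullback–Leibler divergence; $I$ mutual information; $\mathcal G^\delta_S=\{\nu_S: D_{KL}(\nu_S\|P_S)\le\log(1/\delta)\}$. Trajectory $W^{\mathsf T}=(W^t)_{t\in\mathsf T}$, $\mathsf T=[t_1:t_2]\subseteq\mathbb N$, $\Delta t:=t_2-t_1$, $\mathrm{gen}(s,w^{\mathsf T}):=\frac1{\Delta t}\sum_{t\in\mathsf T}\mathrm{gen}(s,w^t)$, and $\rho(w^{\mathsf T},\hat w^{\mathsf T}):=\frac1{\Delta t}\sum_{t\in\mathsf T}\rho(w^t,\hat w^t)$. For a dataset $s$ and conditional $P_{W^{\mathsf T}|s}$, $$\mathfrak{RD}(s,\epsilon;P_{W^{\mathsf T}|s}):=\inf_{P_{\hat W^{\mathsf T}|W^{\mathsf T},s}} I(W^{\mathsf T};\hat W^{\mathsf T})\ \text{ s.t. }\ \mathbb E[\rho(W^{\mathsf T},\hat W^{\mathsf T})]\le\epsilon,$$ with mutual information and expectation under $P_{W^{\mathsf T}|s}P_{\hat W^{\mathsf T}|W^{\mathsf T},s}$. *)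

theory Defs
  imports "HOL-Probability.Probability"
begin

definition KLe :: "'a measure \<Rightarrow> 'a measure \<Rightarrow> ereal" where
  "KLe P Q =
    (if sets P = sets Q \<and> absolutely_continuous Q P
        \<and> integrable P (\<lambda>x. ln (enn2real (RN_deriv Q P x)))
     then ereal (\<integral>x. ln (enn2real (RN_deriv Q P x)) \<partial>P) else \<infinity>)"

definition MI :: "'a measure \<Rightarrow> 'b measure \<Rightarrow> ('a \<times> 'b) measure \<Rightarrow> ereal" where
  "MI A B J = KLe J (distr J A fst \<Otimes>\<^sub>M distr J B snd)"

text \<open>Index set T = [t1:t2], taken as {t1..<t2} so that it has \<Delta>t = t2 - t1 elements.\<close>
definition Tset :: "nat \<Rightarrow> nat \<Rightarrow> nat set" where
  "Tset t1 t2 = {t1..<t2}"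

definition traj_space :: "nat \<Rightarrow> nat \<Rightarrow> 'w measure \<Rightarrow> (nat \<Rightarrow> 'w) measure" where
  "traj_space t1 t2 W = PiM (Tset t1 t2) (\<lambda>_. W)"

definition pop_loss :: "'z measure \<Rightarrow> ('z \<Rightarrow> 'w \<Rightarrow> real) \<Rightarrow> 'w \<Rightarrow> real" where
  "pop_loss \<mu> l w = (\<integral>z. l z w \<partial>\<mu>)"

definition emp_loss :: "nat \<Rightarrow> ('z \<Rightarrow> 'w \<Rightarrow> real) \<Rightarrow> (nat \<Rightarrow> 'z) \<Rightarrow> 'w \<Rightarrow> real" where
  "emp_loss n l s w = (\<Sum>i<n. l (s i) w) / real n"

definition gen :: "'z measure \<Rightarrow> nat \<Rightarrow> ('z \<Rightarrow> 'w \<Rightarrow> real) \<Rightarrow> (nat \<Rightarrow> 'z) \<Rightarrow> 'w \<Rightarrow> real" where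
  "gen \<mu> n l s w = pop_loss \<mu> l w - emp_loss n l s w"

definition gen_traj :: "'z measure \<Rightarrow> nat \<Rightarrow> ('z \<Rightarrow> 'w \<Rightarrow> real) \<Rightarrow> nat \<Rightarrow> nat
    \<Rightarrow> (nat \<Rightarrow> 'z) \<Rightarrow> (nat \<Rightarrow> 'w) \<Rightarrow> real" where
  "gen_traj \<mu> n l t1 t2 s wT = (\<Sum>t\<in>Tset t1 t2. gen \<mu> n l s (wT t)) / real (t2 - t1)"

definition rho_traj :: "('w \<Rightarrow> 'w \<Rightarrow> real) \<Rightarrow> nat \<Rightarrow> nat \<Rightarrow> (nat \<Rightarrow> 'w) \<Rightarrow> (nat \<Rightarrow> 'w) \<Rightarrow> real" where
  "rho_traj \<rho> t1 t2 wT whT = (\<Sum>t\<in>Tset t1 t2. \<rho> (wT t) (whT t)) / real (t2 - t1)"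

text \<open>Joint law of (W^T, What^T) from P_{W^T|s} = P and a reconstruction kernel K.\<close>
definition joint :: "'a measure \<Rightarrow> 'b measure \<Rightarrow> 'a measure \<Rightarrow> ('a \<Rightarrow> 'b measure) \<Rightarrow> ('a \<times> 'b) measure" where
  "joint A B P K = P \<bind> (\<lambda>w. K w \<bind> (\<lambda>wh. return (A \<Otimes>\<^sub>M B) (w, wh)))"

definition RD :: "'w measure \<Rightarrow> 'w set \<Rightarrow> ('w \<Rightarrow> 'w \<Rightarrow> real) \<Rightarrow> nat \<Rightarrow> nat \<Rightarrow> real
    \<Rightarrow> (nat \<Rightarrow> 'w) measure \<Rightarrow> ereal" where
  "RD W What \<rho> t1 t2 \<epsilon> P =
    (let A = traj_space t1 t2 W; B = traj_space t1 t2 (restrict_space W What) in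
     INF K \<in> {K. K \<in> measurable A (prob_algebra B)
                \<and> enn2ereal (\<integral>\<^sup>+ x. ennreal (rho_traj \<rho> t1 t2 (fst x) (snd x)) \<partial>(joint A B P K))
                    \<le> ereal \<epsilon>}.
       MI A B (joint A B P K))"

definition logM :: "'s measure \<Rightarrow> ('s \<Rightarrow> 't measure) \<Rightarrow> real \<Rightarrow> 's \<Rightarrow> ereal" where
  "logM PS \<pi> \<delta> s =
    (SUP \<nu> \<in> {\<nu> \<in> space (prob_algebra PS). KLe \<nu> PS \<le> ereal (ln (1 / \<delta>))}.
       KLe (\<pi> s) (\<nu> \<bind> \<pi>))"

end

theory Submission
  imports Defs
begin

lemma DV:
  fixes P Q :: "'a measure" and f :: "'a \<Rightarrow> real"
  assumes Q: "prob_space Q" and P: "prob_space P" and sets: "sets Q = sets P"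
   and ac: "absolutely_continuous P Q"
   and intq: "integrable Q (\<lambda>x. ln (enn2real (RN_deriv P Q x)))"
   and f: "f \<in> borel_measurable P" and fb: "\<And>x. x \<in> space P \<Longrightarrow> 0 \<le> f x \<and> f x \<le> B"
  shows "(\<integral>x. f x \<partial>Q) \<le> (\<integral>x. ln (enn2real (RN_deriv P Q x)) \<partial>Q) + ln (\<integral>x. exp (f x) \<partial>P)"
proof -
  interpret P: prob_space P by fact
  interpret Q: prob_space Q by fact
  note f[measurable]
  define q where "q = (\<lambda>x. enn2real (RN_deriv P Q x))"
  define C where "C = (\<integral>x. exp (f x) \<partial>P)"
  have spq: "space Q = space P" using sets by (rule sets_eq_imp_space_eq)
  have fQ[measurable]: "f \<in> borel_measurable Q" unfolding measurable_cong_sets[OF sets refl] by (rule f)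
  have qP[measurable]: "q \<in> borel_measurable P" unfolding q_def by simp
  have qQ[measurable]: "q \<in> borel_measurable Q" unfolding measurable_cong_sets[OF sets refl] by (rule qP)
  have qnn: "\<And>x. 0 \<le> q x" by (simp add: q_def)
  have intexp: "integrable P (\<lambda>x. exp (f x))"
    by (rule P.integrable_const_bound[where B="exp B"]) (use fb in auto)
  have C1: "1 \<le> C"
  proof -
    have "(\<integral>x. 1 \<partial>P) \<le> C" unfolding C_def
      by (rule integral_mono) (use intexp fb in auto)
    then show ?thesis by (simp add: P.prob_space)
  qed
  obtain D where D: "D \<in> borel_measurable P" "AE x in P. RN_deriv P Q x = ennreal (D x)"
    "AE x in Q. 0 < D x" "\<And>x. 0 \<le> D x"
    using P.real_RN_deriv[OF Q.finite_measure_axioms ac sets] by blast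
  have DQ: "AE x in Q. RN_deriv P Q x = ennreal (D x)"
    using D(2) ac absolutely_continuous_AE sets by blast
  have qpos: "AE x in Q. 0 < q x"
    using DQ D(3) by eventually_elim (auto simp: q_def D(4))
  have nn: "(\<integral>\<^sup>+ x. ennreal (exp (f x) / q x) \<partial>Q) \<le> ennreal C"
  proof -
    have "(\<integral>\<^sup>+ x. ennreal (exp (f x) / q x) \<partial>Q) = (\<integral>\<^sup>+ x. RN_deriv P Q x * ennreal (exp (f x) / q x) \<partial>P)"
      by (rule P.RN_deriv_nn_integral[OF ac sets]) simp
    also have "\<dots> \<le> (\<integral>\<^sup>+ x. ennreal (exp (f x)) \<partial>P)"
    proof (rule nn_integral_mono)
      fix x
      show "RN_deriv P Q x * ennreal (exp (f x) / q x) \<le> ennreal (exp (f x))"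
      proof (cases "RN_deriv P Q x")
        case (real r)
        then show ?thesis
          by (cases "r = 0") (auto simp: q_def ennreal_mult'' [symmetric] ennreal_leI)
      next
        case top
        then show ?thesis by (simp add: q_def)
      qed
    qed
    also have "\<dots> = ennreal C" unfolding C_def
      by (rule nn_integral_eq_integral) (use intexp in auto)
    finally show ?thesis .
  qed
  have intr: "integrable Q (\<lambda>x. exp (f x) / q x)"
  proof (rule integrableI_nonneg)
    show "(\<integral>\<^sup>+ x. ennreal (exp (f x) / q x) \<partial>Q) < \<infinity>"
      using nn by (simp add: le_less_trans)
  qed (auto simp: qnn)
  have intr_le: "(\<integral>x. exp (f x) / q x \<partial>Q) \<le> C"
  proof -
    have "(\<integral>x. exp (f x) / q x \<partial>Q) = enn2real (\<integral>\<^sup>+ x. ennreal (exp (f x) / q x) \<partial>Q)"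
      by (rule integral_eq_nn_integral) (auto simp: qnn)
    also have "\<dots> \<le> C" using nn C1
      by (metis enn2real_ennreal enn2real_mono ennreal_less_top le_less_trans zero_le_one order.trans)
    finally show ?thesis .
  qed
  have intfQ: "integrable Q f"
    by (rule Q.integrable_const_bound[where B=B]) (use fb spq in auto)
  have pw: "AE x in Q. f x - ln (q x) - ln C \<le> exp (f x) / q x / C - 1"
    using qpos
  proof eventually_elim
    case (elim x)
    have y: "0 < exp (f x) / q x / C" using elim C1 by auto
    have "ln (exp (f x) / q x / C) = f x - ln (q x) - ln C"
      using elim C1 by (simp add: ln_div ln_mult)
    with ln_le_minus_one[OF y] show ?case by simp
  qed
  have "(\<integral>x. f x - ln (q x) - ln C \<partial>Q) \<le> (\<integral>x. exp (f x) / q x / C - 1 \<partial>Q)"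
  proof (rule integral_mono_AE[OF _ _ pw])
    show "integrable Q (\<lambda>x. f x - ln (q x) - ln C)"
      using intfQ intq unfolding q_def by auto
    show "integrable Q (\<lambda>x. exp (f x) / q x / C - 1)"
      by (intro Bochner_Integration.integrable_diff integrable_divide intr) simp
  qed
  also have "(\<integral>x. f x - ln (q x) - ln C \<partial>Q) = (\<integral>x. f x \<partial>Q) - (\<integral>x. ln (q x) \<partial>Q) - ln C"
    using intfQ intq by (simp add: q_def Q.prob_space)
  also have "(\<integral>x. exp (f x) / q x / C - 1 \<partial>Q) = (\<integral>x. exp (f x) / q x \<partial>Q) / C - 1"
  proof -
    have "(\<integral>x. exp (f x) / q x / C - 1 \<partial>Q) = (\<integral>x. exp (f x) / q x / C \<partial>Q) - (\<integral>x. 1 \<partial>Q)"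
      by (rule Bochner_Integration.integral_diff[OF integrable_divide[OF intr]]) simp
    also have "(\<integral>x. exp (f x) / q x / C \<partial>Q) = (\<integral>x. exp (f x) / q x \<partial>Q) / C"
      by (rule integral_divide_zero)
    finally show ?thesis by (simp add: Q.prob_space)
  qed
  also have "\<dots> \<le> 0" using intr_le C1 by (simp add: field_simps)
  finally show ?thesis by (simp add: q_def C_def)
qed

lemma G1: "(\<integral>\<^sup>+ g. ennreal (std_normal_density g * exp (a * g)) \<partial>lborel) = ennreal (exp (a\<^sup>2 / 2))"
proof -
  have eq: "std_normal_density g * exp (a * g) = exp (a\<^sup>2 / 2) * normal_density a 1 g" for g
    by (simp add: normal_density_def mult_exp_exp power2_eq_square field_simps)
  have "(\<integral>\<^sup>+ g. ennreal (std_normal_density g * exp (a * g)) \<partial>lborel)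
      = (\<integral>\<^sup>+ g. ennreal (exp (a\<^sup>2 / 2)) * ennreal (normal_density a 1 g) \<partial>lborel)"
    by (simp add: eq ennreal_mult)
  also have "\<dots> = ennreal (exp (a\<^sup>2 / 2)) * (\<integral>\<^sup>+ g. ennreal (normal_density a 1 g) \<partial>lborel)"
    by (rule nn_integral_cmult) simp
  also have "(\<integral>\<^sup>+ g. ennreal (normal_density a 1 g) \<partial>lborel) = 1"
    by (subst nn_integral_eq_integral) auto
  finally show ?thesis by simp
qed

lemma G2:
  assumes c: "c < 1/2"
  shows "(\<integral>\<^sup>+ g. ennreal (std_normal_density g * exp (c * g\<^sup>2)) \<partial>lborel) = ennreal (1 / sqrt (1 - 2 * c))"
proof -
  define s where "s = 1 / sqrt (1 - 2 * c)"
  have s: "0 < s" using c by (simp add: s_def)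
  have s2: "s\<^sup>2 = 1 / (1 - 2 * c)" using c by (simp add: s_def power_divide)
  have eq: "std_normal_density g * exp (c * g\<^sup>2) = s * normal_density 0 s g" for g
  proof -
    have "sqrt (2 * pi * s\<^sup>2) = sqrt (2 * pi) * s" using s by (simp add: real_sqrt_mult)
    moreover have "- g\<^sup>2 / 2 + c * g\<^sup>2 = - g\<^sup>2 / (2 * s\<^sup>2)" using c by (simp add: s2 field_simps)
    ultimately show ?thesis using s
      by (simp add: normal_density_def std_normal_density_def mult_exp_exp[symmetric] exp_add[symmetric] field_simps)
  qed
  have "(\<integral>\<^sup>+ g. ennreal (std_normal_density g * exp (c * g\<^sup>2)) \<partial>lborel)
      = (\<integral>\<^sup>+ g. ennreal s * ennreal (normal_density 0 s g) \<partial>lborel)"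
    using s by (simp add: eq ennreal_mult)
  also have "\<dots> = ennreal s * (\<integral>\<^sup>+ g. ennreal (normal_density 0 s g) \<partial>lborel)"
    by (rule nn_integral_cmult) simp
  also have "(\<integral>\<^sup>+ g. ennreal (normal_density 0 s g) \<partial>lborel) = 1"
    using s by (subst nn_integral_eq_integral) auto
  finally show ?thesis by (simp add: s_def)
qed

lemma hoeff1:
  assumes mu: "prob_space \<mu>" and h[measurable]: "h \<in> borel_measurable \<mu>"
    and hb: "\<And>z. z \<in> space \<mu> \<Longrightarrow> 0 \<le> h z \<and> h z \<le> 1"
  shows "(\<integral>\<^sup>+ z. ennreal (exp (u * ((\<integral>z. h z \<partial>\<mu>) - h z))) \<partial>\<mu>) \<le> ennreal (exp (u\<^sup>2 / 8))"
proof -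
  interpret prob_space \<mu> by fact
  consider "u > 0" | "u < 0" | "u = 0" by linarith
  then show ?thesis
  proof cases
    case 1
    interpret interval_bounded_random_variable \<mu> "\<lambda>z. - h z" "-1" 0
      by unfold_locales (use hb in \<open>auto intro!: AE_I2\<close>)
    have "(\<integral>\<^sup>+ z. ennreal (exp (u * (- h z - expectation (\<lambda>z. - h z)))) \<partial>\<mu>) \<le> ennreal (exp (u\<^sup>2 * (0 - - 1)\<^sup>2 / 8))"
      by (rule Hoeffdings_lemma_nn_integral) (use 1 in auto)
    then show ?thesis by (simp add: algebra_simps)
  next
    case 2
    interpret interval_bounded_random_variable \<mu> "h" 0 1
      by unfold_locales (use hb in \<open>auto intro!: AE_I2\<close>)
    have "(\<integral>\<^sup>+ z. ennreal (exp ((-u) * (h z - expectation h))) \<partial>\<mu>) \<le> ennreal (exp ((-u)\<^sup>2 * (1 - 0)\<^sup>2 / 8))"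
      by (rule Hoeffdings_lemma_nn_integral) (use 2 in auto)
    then show ?thesis by (simp add: algebra_simps)
  next
    case 3
    then show ?thesis by (simp add: emeasure_space_1)
  qed
qed

lemma hoeffn:
  fixes n :: nat and h :: "'z \<Rightarrow> real"
  assumes mu: "prob_space \<mu>" and h[measurable]: "h \<in> borel_measurable \<mu>"
    and hb: "\<And>z. z \<in> space \<mu> \<Longrightarrow> 0 \<le> h z \<and> h z \<le> 1" and n: "0 < n"
  shows "(\<integral>\<^sup>+ s. ennreal (exp (u * ((\<Sum>i<n. (\<integral>z. h z \<partial>\<mu>) - h (s i)) / n))) \<partial>PiM {..<n} (\<lambda>_. \<mu>))
         \<le> ennreal (exp (u\<^sup>2 / (8 * n)))"
proof -
  interpret prob_space \<mu> by fact
  interpret product_sigma_finite "\<lambda>_. \<mu>"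
    by (simp add: product_sigma_finite_def sigma_finite_measure_axioms)
  define c where "c = (\<integral>z. h z \<partial>\<mu>)"
  have "(\<integral>\<^sup>+ s. ennreal (exp (u * ((\<Sum>i<n. c - h (s i)) / n))) \<partial>PiM {..<n} (\<lambda>_. \<mu>))
      = (\<integral>\<^sup>+ s. (\<Prod>i\<in>{..<n}. ennreal (exp ((u / n) * (c - h (s i))))) \<partial>PiM {..<n} (\<lambda>_. \<mu>))"
  proof (intro nn_integral_cong)
    fix s
    have "exp (u * ((\<Sum>i<n. c - h (s i)) / n)) = exp (\<Sum>i<n. (u / n) * (c - h (s i)))"
      by (simp add: sum_distrib_left sum_divide_distrib)
    also have "\<dots> = (\<Prod>i<n. exp ((u / n) * (c - h (s i))))"
      by (rule exp_sum) simp
    finally show "ennreal (exp (u * ((\<Sum>i<n. c - h (s i)) / n))) = (\<Prod>i\<in>{..<n}. ennreal (exp ((u / n) * (c - h (s i)))))"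
      by (simp add: prod_ennreal)
  qed
  also have "\<dots> = (\<Prod>i\<in>{..<n}. (\<integral>\<^sup>+ z. ennreal (exp ((u / n) * (c - h z))) \<partial>\<mu>))"
    by (rule product_nn_integral_prod) auto
  also have "\<dots> \<le> (\<Prod>i\<in>{..<n}. ennreal (exp ((u / n)\<^sup>2 / 8)))"
    by (intro prod_mono_ennreal hoeff1[OF mu h hb, folded c_def])
  also have "\<dots> = ennreal (exp (u\<^sup>2 / (8 * n)))"
  proof -
    have "(\<Prod>i\<in>{..<n}. ennreal (exp ((u / n)\<^sup>2 / 8))) = ennreal (exp ((u / n)\<^sup>2 / 8) ^ n)"
      by (simp add: ennreal_power)
    also have "exp ((u / n)\<^sup>2 / 8) ^ n = exp (real n * ((u / n)\<^sup>2 / 8))"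
      by (rule exp_of_nat_mult[symmetric])
    also have "real n * ((u / n)\<^sup>2 / 8) = u\<^sup>2 / (8 * n)"
      using n by (simp add: power_divide power2_eq_square field_simps)
    finally show ?thesis .
  qed
  finally show ?thesis by (simp add: c_def)
qed

lemma SQ:
  fixes X :: "'a \<Rightarrow> real"
  assumes M: "prob_space M" and X[measurable]: "X \<in> borel_measurable M"
   and mgf: "\<And>t. (\<integral>\<^sup>+ x. ennreal (exp (t * X x)) \<partial>M) \<le> ennreal (exp (t\<^sup>2 * v))"
   and lam: "0 \<le> lam" and c: "2 * lam * v < 1/2"
  shows "(\<integral>\<^sup>+ x. ennreal (exp (lam * (X x)\<^sup>2)) \<partial>M) \<le> ennreal (1 / sqrt (1 - 4 * lam * v))"
proof -
  interpret prob_space M by fact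
  interpret pair_sigma_finite M lborel
    by (simp add: pair_sigma_finite.intro sigma_finite_measure_axioms lborel.sigma_finite_measure_axioms)
  define a where "a = sqrt (2 * lam)"
  have a2: "a\<^sup>2 = 2 * lam" using lam by (simp add: a_def)
  have "(\<integral>\<^sup>+ x. ennreal (exp (lam * (X x)\<^sup>2)) \<partial>M)
      = (\<integral>\<^sup>+ x. (\<integral>\<^sup>+ g. ennreal (std_normal_density g * exp ((a * X x) * g)) \<partial>lborel) \<partial>M)"
  proof (intro nn_integral_cong)
    fix x
    have "lam * (X x)\<^sup>2 = (a * X x)\<^sup>2 / 2" by (simp add: power_mult_distrib a2)
    then show "ennreal (exp (lam * (X x)\<^sup>2)) = (\<integral>\<^sup>+ g. ennreal (std_normal_density g * exp ((a * X x) * g)) \<partial>lborel)"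
      by (simp add: G1)
  qed
  also have "\<dots> = (\<integral>\<^sup>+ g. (\<integral>\<^sup>+ x. ennreal (std_normal_density g * exp ((a * X x) * g)) \<partial>M) \<partial>lborel)"
    by (rule Fubini'[symmetric]) measurable
  also have "\<dots> = (\<integral>\<^sup>+ g. ennreal (std_normal_density g) * (\<integral>\<^sup>+ x. ennreal (exp ((a * g) * X x)) \<partial>M) \<partial>lborel)"
    by (intro nn_integral_cong, subst nn_integral_cmult[symmetric]) (auto simp: ennreal_mult mult_ac)
  also have "\<dots> \<le> (\<integral>\<^sup>+ g. ennreal (std_normal_density g) * ennreal (exp ((a * g)\<^sup>2 * v)) \<partial>lborel)"
    by (intro nn_integral_mono mult_left_mono mgf) auto
  also have "\<dots> = (\<integral>\<^sup>+ g. ennreal (std_normal_density g * exp ((2 * lam * v) * g\<^sup>2)) \<partial>lborel)"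
    by (intro nn_integral_cong) (simp add: ennreal_mult power_mult_distrib a2 mult_ac)
  also have "\<dots> = ennreal (1 / sqrt (1 - 2 * (2 * lam * v)))"
    by (rule G2[OF c])
  finally show ?thesis by (simp add: mult_ac)
qed

lemma KLe_nonneg:
  assumes P: "prob_space P" and Q: "prob_space Q"
  shows "0 \<le> KLe P Q"
proof (cases "sets P = sets Q \<and> absolutely_continuous Q P
        \<and> integrable P (\<lambda>x. ln (enn2real (RN_deriv Q P x)))")
  case True
  have "(\<integral>x. (\<lambda>_. 0::real) x \<partial>P) \<le> (\<integral>x. ln (enn2real (RN_deriv Q P x)) \<partial>P) + ln (\<integral>x. exp ((\<lambda>_. 0::real) x) \<partial>Q)"
    by (rule DV[OF P Q, where B=0]) (use True in auto)
  then have "0 \<le> (\<integral>x. ln (enn2real (RN_deriv Q P x)) \<partial>P)"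
    using prob_space.prob_space[OF Q] by simp
  then show ?thesis using True by (simp add: KLe_def)
next
  case False
  then have "KLe P Q = \<infinity>" unfolding KLe_def by argo
  then show ?thesis by simp
qed

lemma KLe_self:
  assumes P: "prob_space P"
  shows "KLe P P = 0"
proof -
  interpret prob_space P by fact
  have ae: "AE x in P. 1 = RN_deriv P P x"
    by (rule RN_deriv_unique) (simp_all add: density_1)
  have ae2: "AE x in P. ln (enn2real (RN_deriv P P x)) = 0"
    using ae by eventually_elim (metis enn2real_1 ln_one)
  have int: "integrable P (\<lambda>x. ln (enn2real (RN_deriv P P x)))"
    using integrable_cong_AE[OF _ _ ae2] by simp
  have "(\<integral>x. ln (enn2real (RN_deriv P P x)) \<partial>P) = (\<integral>x. 0 \<partial>P)"
    by (rule integral_cong_AE) (use ae2 in auto)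
  then show ?thesis using int
    by (simp add: KLe_def absolutely_continuous_def)
qed

lemma joint_prob:
  assumes P: "P \<in> space (prob_algebra A)" and K: "K \<in> A \<rightarrow>\<^sub>M prob_algebra B"
  shows "prob_space (joint A B P K)" "sets (joint A B P K) = sets (A \<Otimes>\<^sub>M B)"
proof -
  have ker: "(\<lambda>w. K w \<bind> (\<lambda>wh. return (A \<Otimes>\<^sub>M B) (w, wh))) \<in> A \<rightarrow>\<^sub>M prob_algebra (A \<Otimes>\<^sub>M B)"
  proof (rule measurable_bind_prob_space2[OF K])
    show "(\<lambda>(x, y). return (A \<Otimes>\<^sub>M B) (x, y)) \<in> A \<Otimes>\<^sub>M B \<rightarrow>\<^sub>M prob_algebra (A \<Otimes>\<^sub>M B)"
      unfolding case_prod_eta by (rule measurable_return_prob_space)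
  qed
  show "prob_space (joint A B P K)" unfolding joint_def by (rule prob_space_bind'[OF P ker])
  show "sets (joint A B P K) = sets (A \<Otimes>\<^sub>M B)" unfolding joint_def by (rule sets_bind'[OF P ker])
qed

lemma MI_nonneg:
  assumes P: "P \<in> space (prob_algebra A)" and K: "K \<in> A \<rightarrow>\<^sub>M prob_algebra B"
  shows "0 \<le> MI A B (joint A B P K)"
proof -
  note J = joint_prob[OF P K]
  interpret J: prob_space "joint A B P K" by (rule J(1))
  have f: "fst \<in> joint A B P K \<rightarrow>\<^sub>M A" unfolding measurable_cong_sets[OF J(2) refl] by simp
  have s: "snd \<in> joint A B P K \<rightarrow>\<^sub>M B" unfolding measurable_cong_sets[OF J(2) refl] by simp
  show ?thesis unfolding MI_def
    by (rule KLe_nonneg[OF J(1) prob_space_pair[OF J.prob_space_distr[OF f] J.prob_space_distr[OF s]]])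
qed

lemma RD_nonneg:
  assumes P: "P \<in> space (prob_algebra (traj_space t1 t2 W))"
  shows "0 \<le> RD W What \<rho> t1 t2 \<epsilon> P"
  unfolding RD_def Let_def
  by (rule INF_greatest) (use MI_nonneg[OF P] in blast)

lemma RD_neg:
  assumes "\<epsilon> < 0"
  shows "RD W What \<rho> t1 t2 \<epsilon> P = \<infinity>"
proof -
  have nle: "\<not> enn2ereal x \<le> ereal \<epsilon>" for x
  proof
    assume h: "enn2ereal x \<le> ereal \<epsilon>"
    have "0 \<le> enn2ereal x" by simp
    then have "(0::ereal) \<le> ereal \<epsilon>" using h by (rule order_trans)
    then show False using assms by simp
  qed
  show ?thesis unfolding RD_def Let_def by (simp add: nle top_ereal_def)
qed

theorem theorem7:
  fixes \<mu> :: "'z measure" and W :: "'w measure" and What :: "'w set"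
    and l :: "'z \<Rightarrow> 'w \<Rightarrow> real" and \<rho> :: "'w \<Rightarrow> 'w \<Rightarrow> real" and L :: real
    and n t1 t2 :: nat and \<pi> :: "(nat \<Rightarrow> 'z) \<Rightarrow> (nat \<Rightarrow> 'w) measure"
    and \<epsilon> \<delta> :: real
  assumes mu: "prob_space \<mu>"
    and n: "0 < n" and T: "t1 < t2"
    and What: "What \<subseteq> space W"
    and l_meas: "(\<lambda>(z, w). l z w) \<in> borel_measurable (\<mu> \<Otimes>\<^sub>M W)"
    and l_range: "\<forall>z\<in>space \<mu>. \<forall>w\<in>space W. 0 \<le> l z w \<and> l z w \<le> 1"
    and rho_meas: "(\<lambda>(w, wh). \<rho> w wh) \<in> borel_measurable (W \<Otimes>\<^sub>M restrict_space W What)"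
    and rho_nonneg: "\<forall>w\<in>space W. \<forall>wh\<in>What. 0 \<le> \<rho> w wh"
    and L: "0 \<le> L"
    and lip: "\<forall>z\<in>space \<mu>. \<forall>w\<in>space W. \<forall>wh\<in>What. \<bar>l z w - l z wh\<bar> \<le> L * \<rho> w wh"
    and pi: "\<pi> \<in> measurable (PiM {..<n} (\<lambda>_. \<mu>)) (prob_algebra (traj_space t1 t2 W))"
    and delta: "0 < \<delta>" "\<delta> < 1"
  shows "\<exists>A \<in> sets (PiM {..<n} (\<lambda>_. \<mu>)).
     A \<subseteq> {s \<in> space (PiM {..<n} (\<lambda>_. \<mu>)).
            RD W What \<rho> t1 t2 \<epsilon> (\<pi> s) = \<infinity>
          \<or> logM (PiM {..<n} (\<lambda>_. \<mu>)) \<pi> \<delta> s = \<infinity>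
          \<or> (\<integral>wT. gen_traj \<mu> n l t1 t2 s wT \<partial>(\<pi> s))
              \<le> sqrt ((real_of_ereal (RD W What \<rho> t1 t2 \<epsilon> (\<pi> s))
                       + ln (sqrt (2 * real n)
                             * exp (real_of_ereal (logM (PiM {..<n} (\<lambda>_. \<mu>)) \<pi> \<delta> s)) / \<delta>))
                      / (2 * real n - 1)
                     + 4 * L * \<epsilon>)}
     \<and> 1 - \<delta> \<le> measure (PiM {..<n} (\<lambda>_. \<mu>)) A"
proof -
  interpret mu: prob_space \<mu> by (rule mu)
  define PS where "PS = PiM {..<n} (\<lambda>_. \<mu>)"
  define TS where "TS = traj_space t1 t2 W"
  define P where "P = PS \<bind> \<pi>"
  define lam where "lam = 2 * real n - 1"
  define g where "g = gen_traj \<mu> n l t1 t2"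
  define F where "F = (\<lambda>s. \<integral>\<^sup>+ w. ennreal (exp (lam * (g s w)\<^sup>2)) \<partial>P)"
  define C0 where "C0 = sqrt (2 * real n) / \<delta>"
  have lam: "1 \<le> lam" using n by (simp add: lam_def)
  have PSprob: "prob_space PS" unfolding PS_def by (rule prob_space_PiM) (rule mu)
  interpret PS: prob_space PS by (rule PSprob)
  have PSalg: "PS \<in> space (prob_algebra PS)" by (simp add: space_prob_algebra PSprob)
  have pi': "\<pi> \<in> PS \<rightarrow>\<^sub>M prob_algebra TS" using pi by (simp add: PS_def TS_def)
  have Pprob: "prob_space P" unfolding P_def by (rule prob_space_bind'[OF PSalg pi'])
  have Psets: "sets P = sets TS" unfolding P_def by (rule sets_bind'[OF PSalg pi'])
  interpret P: prob_space P by (rule Pprob)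
  have spP: "space P = space TS" using Psets by (rule sets_eq_imp_space_eq)
  have lmeas2: "(\<lambda>x. l (f x) (h x)) \<in> borel_measurable M"
    if f: "f \<in> M \<rightarrow>\<^sub>M \<mu>" and h: "h \<in> M \<rightarrow>\<^sub>M W" for M :: "'b measure" and f h
    using measurable_compose[OF measurable_Pair[OF f h] l_meas] by simp
  have popmeas: "(\<lambda>w. pop_loss \<mu> l w) \<in> borel_measurable W"
  proof -
    have "(\<lambda>x. l (snd x) (fst x)) \<in> borel_measurable (W \<Otimes>\<^sub>M \<mu>)"
      by (rule lmeas2) simp_all
    then have "case_prod (\<lambda>w z. l z w) \<in> borel_measurable (W \<Otimes>\<^sub>M \<mu>)"
      by (simp add: case_prod_beta')
    then show ?thesis unfolding pop_loss_def by (rule mu.borel_measurable_lebesgue_integral)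
  qed
  have comp: "(\<lambda>x. snd x t) \<in> PS \<Otimes>\<^sub>M TS \<rightarrow>\<^sub>M W" if "t \<in> Tset t1 t2" for t
    using that unfolding TS_def traj_space_def by measurable
  have compi: "(\<lambda>x. fst x i) \<in> PS \<Otimes>\<^sub>M TS \<rightarrow>\<^sub>M \<mu>" if "i \<in> {..<n}" for i
    using that unfolding PS_def by measurable
  have pm: "(\<lambda>x. pop_loss \<mu> l (snd x t)) \<in> borel_measurable (PS \<Otimes>\<^sub>M TS)" if "t \<in> Tset t1 t2" for t
    by (rule measurable_compose[OF comp[OF that] popmeas])
  have lm: "(\<lambda>x. l (fst x i) (snd x t)) \<in> borel_measurable (PS \<Otimes>\<^sub>M TS)"
    if "t \<in> Tset t1 t2" "i \<in> {..<n}" for t i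
    by (rule lmeas2[OF compi[OF that(2)] comp[OF that(1)]])
  have gmeas: "(\<lambda>(s, w). g s w) \<in> borel_measurable (PS \<Otimes>\<^sub>M TS)"
    unfolding g_def gen_traj_def gen_def emp_loss_def case_prod_beta'
    by (intro borel_measurable_divide borel_measurable_sum borel_measurable_diff pm lm borel_measurable_const)
  have spW: "w t \<in> space W" if "w \<in> space TS" "t \<in> Tset t1 t2" for w t
    using that unfolding TS_def traj_space_def by (auto simp: space_PiM)
  have spmu: "s i \<in> space \<mu>" if "s \<in> space PS" "i < n" for s i
    using that unfolding PS_def by (auto simp: space_PiM)
  have cardT: "card (Tset t1 t2) = t2 - t1" by (simp add: Tset_def)
  have finT: "finite (Tset t1 t2)" by (simp add: Tset_def)
  have DT: "0 < real (t2 - t1)" using T by simp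
  define H where "H = (\<lambda>w z. (\<Sum>t\<in>Tset t1 t2. l z (w t)) / real (t2 - t1))"
  have Hmeas: "H w \<in> borel_measurable \<mu>" if w: "w \<in> space TS" for w
    unfolding H_def
    by (intro borel_measurable_divide borel_measurable_sum borel_measurable_const lmeas2
          measurable_ident_sets measurable_const spW[OF w]) auto
  have Hb: "0 \<le> H w z \<and> H w z \<le> 1" if w: "w \<in> space TS" and z: "z \<in> space \<mu>" for w z
  proof -
    have "(\<Sum>t\<in>Tset t1 t2. l z (w t)) \<le> of_nat (card (Tset t1 t2)) * 1"
      by (rule sum_bounded_above) (use l_range spW[OF w] z in auto)
    moreover have "0 \<le> (\<Sum>t\<in>Tset t1 t2. l z (w t))"
      by (rule sum_nonneg) (use l_range spW[OF w] z in auto)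
    ultimately show ?thesis using DT by (simp add: H_def cardT)
  qed
  have lint: "integrable \<mu> (\<lambda>z. l z (w t))" if w: "w \<in> space TS" and t: "t \<in> Tset t1 t2" for w t
    by (rule mu.integrable_const_bound[where B=1])
       (use l_range spW[OF w t] in \<open>auto intro!: AE_I2 lmeas2 measurable_ident_sets measurable_const\<close>)
  have Hint: "(\<integral>z. H w z \<partial>\<mu>) = (\<Sum>t\<in>Tset t1 t2. pop_loss \<mu> l (w t)) / real (t2 - t1)"
    if w: "w \<in> space TS" for w
  proof -
    have "(\<integral>z. H w z \<partial>\<mu>) = (\<integral>z. (\<Sum>t\<in>Tset t1 t2. l z (w t)) \<partial>\<mu>) / real (t2 - t1)"
      unfolding H_def by (rule integral_divide_zero)
    also have "(\<integral>z. (\<Sum>t\<in>Tset t1 t2. l z (w t)) \<partial>\<mu>) = (\<Sum>t\<in>Tset t1 t2. (\<integral>z. l z (w t) \<partial>\<mu>))"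
      by (rule Bochner_Integration.integral_sum) (rule lint[OF w])
    finally show ?thesis unfolding pop_loss_def .
  qed
  have rep: "g s w = (\<Sum>i<n. (\<integral>z. H w z \<partial>\<mu>) - H w (s i)) / real n"
    if w: "w \<in> space TS" for w s
  proof -
    define D where "D = real (t2 - t1)"
    define Pp where "Pp = (\<Sum>t\<in>Tset t1 t2. pop_loss \<mu> l (w t))"
    define Lm where "Lm = (\<Sum>t\<in>Tset t1 t2. \<Sum>i<n. l (s i) (w t))"
    have e1: "g s w = (Pp - Lm / real n) / D"
      unfolding g_def gen_traj_def gen_def emp_loss_def Pp_def Lm_def D_def
      by (simp only: sum_subtractf sum_divide_distrib[symmetric])
    have e2: "(\<Sum>i<n. H w (s i)) = Lm / D"
      unfolding H_def Lm_def D_def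
      by (simp only: sum_divide_distrib[symmetric] sum.swap[of _ "Tset t1 t2"])
    have e3: "(\<Sum>i<n. (\<integral>z. H w z \<partial>\<mu>) - H w (s i)) = real n * (Pp / D) - Lm / D"
      by (simp only: sum_subtractf e2 Hint[OF w] Pp_def D_def) simp
    have "0 < D" using DT by (simp add: D_def)
    then show ?thesis unfolding e1 e3 using n by (simp add: field_simps)
  qed
  have gb: "\<bar>g s w\<bar> \<le> 1" if s: "s \<in> space PS" and w: "w \<in> space TS" for s w
  proof -
    define c where "c = (\<integral>z. H w z \<partial>\<mu>)"
    have c0: "0 \<le> c" unfolding c_def by (rule integral_nonneg_AE) (use Hb[OF w] in \<open>auto intro!: AE_I2\<close>)
    have "c \<le> (\<integral>z. 1 \<partial>\<mu>)" unfolding c_def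
      by (rule integral_mono) (use Hb[OF w] Hmeas[OF w] in \<open>auto intro!: mu.integrable_const_bound[where B=1]\<close>)
    then have c1: "c \<le> 1" by (simp add: mu.prob_space)
    have "\<bar>\<Sum>i<n. c - H w (s i)\<bar> \<le> (\<Sum>i<n. \<bar>c - H w (s i)\<bar>)" by (rule sum_abs)
    also have "\<dots> \<le> of_nat (card {..<n}) * 1"
    proof (rule sum_bounded_above)
      fix i assume "i \<in> {..<n}"
      then have "0 \<le> H w (s i) \<and> H w (s i) \<le> 1" using Hb[OF w spmu[OF s]] by simp
      then show "\<bar>c - H w (s i)\<bar> \<le> 1" using c0 c1 by (simp add: abs_le_iff)
    qed
    finally have "\<bar>\<Sum>i<n. c - H w (s i)\<bar> \<le> real n" by simp
    then show ?thesis unfolding rep[OF w] c_def[symmetric] using n by (simp add: divide_le_eq_1)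
  qed
  have hH: "(\<integral>\<^sup>+ s. ennreal (exp (lam * (g s w)\<^sup>2)) \<partial>PS) \<le> ennreal (sqrt (2 * real n))"
    if w: "w \<in> space TS" for w
  proof -
    have X: "(\<lambda>s. g s w) \<in> borel_measurable PS"
      using measurable_compose[OF measurable_Pair2'[OF w] gmeas] by simp
    have mgf: "(\<integral>\<^sup>+ s. ennreal (exp (t * g s w)) \<partial>PS) \<le> ennreal (exp (t\<^sup>2 * (1 / (8 * real n))))" for t
      using hoeffn[OF mu Hmeas[OF w] Hb[OF w] n, of t] unfolding rep[OF w] PS_def by simp
    have "(\<integral>\<^sup>+ s. ennreal (exp (lam * (g s w)\<^sup>2)) \<partial>PS) \<le> ennreal (1 / sqrt (1 - 4 * lam * (1 / (8 * real n))))"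
      by (rule SQ[OF PSprob X mgf]) (use lam n in \<open>auto simp: lam_def field_simps\<close>)
    also have "1 - 4 * lam * (1 / (8 * real n)) = 1 / (2 * real n)"
      using n by (simp add: lam_def field_simps)
    also have "1 / sqrt (1 / (2 * real n)) = sqrt (2 * real n)"
      using n by (simp add: real_sqrt_divide)
    finally show ?thesis .
  qed
  have gPmeas: "(\<lambda>(s, w). g s w) \<in> borel_measurable (PS \<Otimes>\<^sub>M P)"
    unfolding measurable_cong_sets[OF sets_pair_measure_cong[OF refl Psets] refl] by (rule gmeas)
  have Gmeas: "(\<lambda>(s, w). ennreal (exp (lam * (g s w)\<^sup>2))) \<in> borel_measurable (PS \<Otimes>\<^sub>M P)"
  proof -
    have "(\<lambda>x::real. ennreal (exp (lam * x\<^sup>2))) \<in> borel_measurable borel" by measurable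
    from measurable_compose[OF gPmeas this] show ?thesis by (simp add: case_prod_beta')
  qed
  have Fmeas[measurable]: "F \<in> borel_measurable PS"
    unfolding F_def using P.borel_measurable_nn_integral[OF Gmeas] by simp
  interpret PSP: pair_sigma_finite PS P
    by (simp add: pair_sigma_finite.intro PS.sigma_finite_measure_axioms P.sigma_finite_measure_axioms)
  have intF: "(\<integral>\<^sup>+ s. F s \<partial>PS) \<le> ennreal (sqrt (2 * real n))"
  proof -
    have "(\<integral>\<^sup>+ s. F s \<partial>PS) = (\<integral>\<^sup>+ w. (\<integral>\<^sup>+ s. ennreal (exp (lam * (g s w)\<^sup>2)) \<partial>PS) \<partial>P)"
      unfolding F_def by (rule PSP.Fubini'[symmetric, OF Gmeas])
    also have "\<dots> \<le> (\<integral>\<^sup>+ w. ennreal (sqrt (2 * real n)) \<partial>P)"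
      by (rule nn_integral_mono) (use hH spP in auto)
    also have "\<dots> = ennreal (sqrt (2 * real n))" by (simp add: P.emeasure_space_1)
    finally show ?thesis .
  qed
  have C0: "0 < C0" unfolding C0_def using n delta by simp
  define B where "B = {s \<in> space PS. ennreal C0 < F s}"
  have Bsets: "B \<in> sets PS" unfolding B_def by measurable
  have "emeasure PS B \<le> emeasure PS {x \<in> space PS. 1 \<le> ennreal (1 / C0) * F x}"
  proof (rule emeasure_mono)
    show "B \<subseteq> {x \<in> space PS. 1 \<le> ennreal (1 / C0) * F x}"
    proof safe
      fix x assume "x \<in> B"
      then have x: "x \<in> space PS" "ennreal C0 < F x" by (auto simp: B_def)
      have "1 = ennreal (1 / C0) * ennreal C0" using C0 by (simp flip: ennreal_mult)
      also have "\<dots> \<le> ennreal (1 / C0) * F x" using x(2) by (intro mult_left_mono) auto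
      finally show "1 \<le> ennreal (1 / C0) * F x" .
    qed (auto simp: B_def)
  qed measurable
  also have "\<dots> \<le> ennreal (1 / C0) * (\<integral>\<^sup>+ x. F x * indicator (space PS) x \<partial>PS)"
    using nn_integral_Markov_inequality[of F "space PS" PS "ennreal (1 / C0)"] by simp
  also have "(\<integral>\<^sup>+ x. F x * indicator (space PS) x \<partial>PS) = (\<integral>\<^sup>+ x. F x \<partial>PS)"
    by (rule nn_integral_cong) simp
  also have "ennreal (1 / C0) * \<dots> \<le> ennreal (1 / C0) * ennreal (sqrt (2 * real n))"
    by (rule mult_left_mono[OF intF]) simp
  also have "\<dots> = ennreal \<delta>"
    using n delta by (simp add: C0_def flip: ennreal_mult)
  finally have "emeasure PS B \<le> ennreal \<delta>" .
  then have mB: "measure PS B \<le> \<delta>"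
    using delta by (simp add: PS.emeasure_eq_measure)
  define A where "A = {s \<in> space PS. F s \<le> ennreal C0}"
  have AB: "A = space PS - B" by (auto simp: A_def B_def not_less)
  have Asets: "A \<in> sets PS" unfolding A_def by measurable
  have mA: "1 - \<delta> \<le> measure PS A"
    unfolding AB using PS.prob_compl[OF Bsets] mB by simp
  have main: "RD W What \<rho> t1 t2 \<epsilon> (\<pi> s) = \<infinity>
          \<or> logM PS \<pi> \<delta> s = \<infinity>
          \<or> (\<integral>wT. gen_traj \<mu> n l t1 t2 s wT \<partial>(\<pi> s))
              \<le> sqrt ((real_of_ereal (RD W What \<rho> t1 t2 \<epsilon> (\<pi> s))
                       + ln (sqrt (2 * real n)
                             * exp (real_of_ereal (logM PS \<pi> \<delta> s)) / \<delta>))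
                      / (2 * real n - 1)
                     + 4 * L * \<epsilon>)"
    if sA: "s \<in> A" for s
  proof (cases "RD W What \<rho> t1 t2 \<epsilon> (\<pi> s) = \<infinity> \<or> logM PS \<pi> \<delta> s = \<infinity>")
    case True
    then show ?thesis by blast
  next
    case False
    then have RDfin: "RD W What \<rho> t1 t2 \<epsilon> (\<pi> s) \<noteq> \<infinity>" and LMfin: "logM PS \<pi> \<delta> s \<noteq> \<infinity>" by auto
    have s: "s \<in> space PS" and Fs: "F s \<le> ennreal C0" using sA by (auto simp: A_def)
    have pis: "\<pi> s \<in> space (prob_algebra TS)" by (rule measurable_space[OF pi' s])
    have pisprob: "prob_space (\<pi> s)" and pisets: "sets (\<pi> s) = sets TS"
      using pis by (auto simp: space_prob_algebra)
    interpret Q: prob_space "\<pi> s" by (rule pisprob)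
    have spQ: "space (\<pi> s) = space TS" using pisets by (rule sets_eq_imp_space_eq)
    have RDnn: "0 \<le> real_of_ereal (RD W What \<rho> t1 t2 \<epsilon> (\<pi> s))"
      using RD_nonneg[OF pis[unfolded TS_def]] by (rule real_of_ereal_pos)
    have eps: "0 \<le> \<epsilon>"
    proof (rule ccontr)
      assume "\<not> 0 \<le> \<epsilon>"
      then have "RD W What \<rho> t1 t2 \<epsilon> (\<pi> s) = \<infinity>" by (intro RD_neg) simp
      with RDfin show False by simp
    qed
    have lnd: "0 \<le> ln (1 / \<delta>)" using delta by simp
    have KLle: "KLe (\<pi> s) P \<le> logM PS \<pi> \<delta> s"
      unfolding logM_def P_def
      by (rule SUP_upper) (use PSalg KLe_self[OF PSprob] lnd in simp)
    have KLfin: "KLe (\<pi> s) P \<noteq> \<infinity>" using KLle LMfin by (auto simp: top_unique)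
    have cond: "sets (\<pi> s) = sets P \<and> absolutely_continuous P (\<pi> s)
        \<and> integrable (\<pi> s) (\<lambda>x. ln (enn2real (RN_deriv P (\<pi> s) x)))"
    proof (rule ccontr)
      assume "\<not> ?thesis"
      then have "KLe (\<pi> s) P = \<infinity>" unfolding KLe_def by argo
      with KLfin show False by simp
    qed
    define Kr where "Kr = (\<integral>x. ln (enn2real (RN_deriv P (\<pi> s) x)) \<partial>\<pi> s)"
    have KLeq: "KLe (\<pi> s) P = ereal Kr"
      unfolding KLe_def Kr_def using cond by argo
    obtain Lm where Lm: "logM PS \<pi> \<delta> s = ereal Lm"
      using KLle LMfin unfolding KLeq by (cases "logM PS \<pi> \<delta> s") auto
    have KrLm: "Kr \<le> Lm" using KLle unfolding KLeq Lm by simp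
    have X': "(\<lambda>w. g s w) \<in> borel_measurable TS"
      using measurable_compose[OF measurable_Pair1'[OF s] gmeas] by simp
    have gP: "(\<lambda>w. g s w) \<in> borel_measurable P"
      unfolding measurable_cong_sets[OF Psets refl] by (rule X')
    have gQ: "(\<lambda>w. g s w) \<in> borel_measurable (\<pi> s)"
      unfolding measurable_cong_sets[OF pisets refl] by (rule X')
    have g2: "(g s w)\<^sup>2 \<le> 1" if "w \<in> space TS" for w
      using gb[OF s that] by (simp add: abs_square_le_1)
    have fm: "(\<lambda>w. lam * (g s w)\<^sup>2) \<in> borel_measurable P" using gP by measurable
    have fb: "0 \<le> lam * (g s w)\<^sup>2 \<and> lam * (g s w)\<^sup>2 \<le> lam" if "w \<in> space P" for w
      using g2[of w] that spP lam by (auto intro: mult_left_le)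
    have DVs: "(\<integral>w. lam * (g s w)\<^sup>2 \<partial>\<pi> s) \<le> Kr + ln (\<integral>w. exp (lam * (g s w)\<^sup>2) \<partial>P)"
      unfolding Kr_def using cond by (intro DV[OF pisprob Pprob _ _ _ fm fb]) auto
    have intexp: "integrable P (\<lambda>w. exp (lam * (g s w)\<^sup>2))"
      by (rule P.integrable_const_bound[where B="exp lam"]) (use fb fm in auto)
    have E1: "1 \<le> (\<integral>w. exp (lam * (g s w)\<^sup>2) \<partial>P)"
    proof -
      have "(\<integral>w. 1 \<partial>P) \<le> (\<integral>w. exp (lam * (g s w)\<^sup>2) \<partial>P)"
        by (rule integral_mono) (use intexp fb in auto)
      then show ?thesis by (simp add: P.prob_space)
    qed
    have E2: "(\<integral>w. exp (lam * (g s w)\<^sup>2) \<partial>P) \<le> C0"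
    proof -
      have "(\<integral>w. exp (lam * (g s w)\<^sup>2) \<partial>P) = enn2real (F s)"
        unfolding F_def by (rule integral_eq_nn_integral) (use fm in auto)
      also have "\<dots> \<le> enn2real (ennreal C0)" by (rule enn2real_mono[OF Fs]) simp
      finally show ?thesis using C0 by simp
    qed
    have lnle: "ln (\<integral>w. exp (lam * (g s w)\<^sup>2) \<partial>P) \<le> ln C0"
      using E1 E2 by simp
    have intg: "integrable (\<pi> s) (\<lambda>w. g s w)"
      by (rule Q.integrable_const_bound[where B=1]) (use gb[OF s] spQ gQ in auto)
    have intg2: "integrable (\<pi> s) (\<lambda>w. (g s w)\<^sup>2)"
      by (rule Q.integrable_const_bound[where B=1]) (use g2 spQ gQ in auto)
    have var: "(\<integral>w. g s w \<partial>\<pi> s)\<^sup>2 \<le> (\<integral>w. (g s w)\<^sup>2 \<partial>\<pi> s)"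
    proof -
      have "0 \<le> Q.variance (\<lambda>w. g s w)" by (rule integral_nonneg_AE) simp
      then show ?thesis using Q.variance_eq[OF intg intg2] by simp
    qed
    have Eg: "(\<integral>w. g s w \<partial>\<pi> s) \<le> sqrt (\<integral>w. (g s w)\<^sup>2 \<partial>\<pi> s)"
    proof -
      have "(\<integral>w. g s w \<partial>\<pi> s) \<le> sqrt ((\<integral>w. g s w \<partial>\<pi> s)\<^sup>2)" by simp
      also have "\<dots> \<le> sqrt (\<integral>w. (g s w)\<^sup>2 \<partial>\<pi> s)" using var by (rule real_sqrt_le_mono)
      finally show ?thesis .
    qed
    have Eg2: "lam * (\<integral>w. (g s w)\<^sup>2 \<partial>\<pi> s) \<le> Kr + ln C0"
      using DVs lnle by simp
    have lnC0: "ln C0 = ln (sqrt (2 * real n)) - ln \<delta>"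
      unfolding C0_def using n delta by (simp add: ln_div)
    have lnM: "ln (sqrt (2 * real n) * exp Lm / \<delta>) = ln (sqrt (2 * real n)) + Lm - ln \<delta>"
      using n delta by (simp add: ln_div ln_mult)
    have "(\<integral>w. (g s w)\<^sup>2 \<partial>\<pi> s) \<le> (Kr + ln C0) / lam"
      using Eg2 lam by (simp add: field_simps)
    also have "\<dots> \<le> (real_of_ereal (RD W What \<rho> t1 t2 \<epsilon> (\<pi> s))
                       + ln (sqrt (2 * real n) * exp Lm / \<delta>)) / (2 * real n - 1) + 4 * L * \<epsilon>"
    proof -
      have "(Kr + ln C0) / lam \<le> (real_of_ereal (RD W What \<rho> t1 t2 \<epsilon> (\<pi> s))
                       + ln (sqrt (2 * real n) * exp Lm / \<delta>)) / lam"
        using KrLm RDnn lam unfolding lnC0 lnM by (intro divide_right_mono) auto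
      moreover have "0 \<le> 4 * L * \<epsilon>" using L eps by simp
      ultimately show ?thesis by (simp add: lam_def)
    qed
    finally have "(\<integral>w. g s w \<partial>\<pi> s) \<le> sqrt ((real_of_ereal (RD W What \<rho> t1 t2 \<epsilon> (\<pi> s))
                       + ln (sqrt (2 * real n) * exp Lm / \<delta>)) / (2 * real n - 1) + 4 * L * \<epsilon>)"
      using Eg by (meson order_trans real_sqrt_le_mono)
    then show ?thesis unfolding Lm g_def by simp
  qed
  show ?thesis
    unfolding PS_def[symmetric]
  proof (intro bexI[of _ A] conjI subsetI)
    fix s assume "s \<in> A"
    then show "s \<in> {s \<in> space PS. RD W What \<rho> t1 t2 \<epsilon> (\<pi> s) = \<infinity>
          \<or> logM PS \<pi> \<delta> s = \<infinity>
          \<or> (\<integral>wT. gen_traj \<mu> n l t1 t2 s wT \<partial>(\<pi> s))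
              \<le> sqrt ((real_of_ereal (RD W What \<rho> t1 t2 \<epsilon> (\<pi> s))
                       + ln (sqrt (2 * real n)
                             * exp (real_of_ereal (logM PS \<pi> \<delta> s)) / \<delta>))
                      / (2 * real n - 1)
                     + 4 * L * \<epsilon>)}"
      using main[of s] by (simp add: A_def)
  qed (use Asets mA in auto)
qed

end
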